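(* Let $d\ge2$ and let $g$ be the metric on $\mathbb R^d$ defined below. Let $y\in(0,1)^d$ be such that $\lim \frac{1}{\mathcal L^1(I)}\int_I|\theta-2|\,d\mathcal L^1=0$ as $I$ ranges over open intervals containing $y_1$ with $\mathcal L^1(I)\to0$. Then for every $u=(u_1,u')\in\mathbb R\times\mathbb R^{d-1}$, $\lim_{h\to0}\frac{\mathsf d_g(y,y+hu)}{|h|}=\alpha(u)$, where $\alpha(u)=|u_1|+|u'|$ if $|u_1|\le|u'|$ and $\alpha(u)=\sqrt2\,|u|$ otherwise (Euclidean norms).
   Context: Let $(q_i)_{i\ge1}$ be an enumeration of $\mathbb Q\cap(0,1)$, fix $\kappa\in(0,1/8)$, and set $O=\bigcup_{i\ge1}(q_i-\kappa2^{-i},q_i+\kappa2^{-i})$, $\theta=2-\mathbbm 1_O$ on $(0,1)$, and $g(x)=2\,\mathrm{Id}$ if $x\notin(0,1)^d$, $g(x)=\theta(x_1)\,\mathrm{Id}$ if $x\in(0,1)^d$. The distance is $\mathsf d_g(x,y)=\sup\{w(x)-w(y): w\text{ Lipschitz}, |\nabla_g w|_g\le1\text{ a.e.}\}$ (equal to the limit of the length distances of mollifications $\rho_\varepsilon*g$). *)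

theory Defs
  imports "HOL-Analysis.Analysis"
begin

text \<open>Points of R^d are represented as pairs (x1, x') in real \<times> real^'m, so d = 1 + CARD('m) \<ge> 2.
  The norm on this product type is the Euclidean norm.\<close>

definition O_set :: "(nat \<Rightarrow> real) \<Rightarrow> real \<Rightarrow> real set" where
  "O_set q \<kappa> = (\<Union>i\<in>{1..}. {q i - \<kappa> / 2 ^ i <..< q i + \<kappa> / 2 ^ i})"

definition theta :: "(nat \<Rightarrow> real) \<Rightarrow> real \<Rightarrow> real \<Rightarrow> real" where
  "theta q \<kappa> t = 2 - indicator (O_set q \<kappa>) t"

definition open_cube :: "(real \<times> (real ^ 'm)) set" where
  "open_cube = {x. 0 < fst x \<and> fst x < 1 \<and> (\<forall>i. 0 < snd x $ i \<and> snd x $ i < 1)}"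

text \<open>The metric g(x) = gfac(x) Id (conformal factor).\<close>
definition gfac :: "(nat \<Rightarrow> real) \<Rightarrow> real \<Rightarrow> real \<times> (real ^ 'm) \<Rightarrow> real" where
  "gfac q \<kappa> x = (if x \<in> open_cube then theta q \<kappa> (fst x) else 2)"

text \<open>w is admissible: Lipschitz, and |\<nabla>_g w|_g \<le> 1 a.e.; for g = c Id this means
  |\<nabla> w(x)| \<le> sqrt (c x), i.e. the differential D satisfies |D v| \<le> sqrt (c x) |v|.\<close>
definition admissible :: "(nat \<Rightarrow> real) \<Rightarrow> real \<Rightarrow> (real \<times> (real ^ 'm) \<Rightarrow> real) \<Rightarrow> bool" where
  "admissible q \<kappa> w \<longleftrightarrow> (\<exists>C. C-lipschitz_on UNIV w) \<and>
     (AE x in lebesgue. w differentiable (at x) \<and>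
        (\<forall>D. (w has_derivative D) (at x) \<longrightarrow> (\<forall>v. \<bar>D v\<bar> \<le> sqrt (gfac q \<kappa> x) * norm v)))"

definition dist_g :: "(nat \<Rightarrow> real) \<Rightarrow> real \<Rightarrow> real \<times> (real ^ 'm) \<Rightarrow> real \<times> (real ^ 'm) \<Rightarrow> real" where
  "dist_g q \<kappa> x y = Sup {w x - w y | w. admissible q \<kappa> w}"

definition alpha :: "real \<times> (real ^ 'm) \<Rightarrow> real" where
  "alpha u = (if \<bar>fst u\<bar> \<le> norm (snd u) then \<bar>fst u\<bar> + norm (snd u) else sqrt 2 * norm u)"

end

theory Submission
  imports Defs
begin

lemma meas_Ioc: "a \<le> b \<Longrightarrow> measure lebesgue {a<..(b::real)} = b - a"
  by simp

lemma deriv_local_bound: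
  fixes f :: "real \<Rightarrow> real"
  assumes "(f has_real_derivative D) (at t)" "e > 0"
  shows "\<exists>d>0. \<forall>y. \<bar>y - t\<bar> < d \<longrightarrow> \<bar>f y - f t - D * (y - t)\<bar> \<le> e * \<bar>y - t\<bar>"
proof -
  have "((\<lambda>y. (f y - f t) / (y - t)) \<longlongrightarrow> D) (at t)"
    using assms(1) has_field_derivative_iff by blast
  then obtain d where d: "d > 0" "\<And>y. y \<noteq> t \<Longrightarrow> dist y t < d \<Longrightarrow> dist ((f y - f t) / (y - t)) D < e"
    using assms(2) unfolding tendsto_iff eventually_at by blast
  show ?thesis
  proof (intro exI[of _ d] conjI allI impI d(1))
    fix y assume y: "\<bar>y - t\<bar> < d"
    show "\<bar>f y - f t - D * (y - t)\<bar> \<le> e * \<bar>y - t\<bar>"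
    proof (cases "y = t")
      case False
      then have "\<bar>(f y - f t) / (y - t) - D\<bar> < e" using d(2)[of y] y by (simp add: dist_real_def)
      then have "\<bar>(f y - f t) / (y - t) - D\<bar> * \<bar>y - t\<bar> \<le> e * \<bar>y - t\<bar>"
        by (simp add: mult_right_mono)
      also have "\<bar>(f y - f t) / (y - t) - D\<bar> * \<bar>y - t\<bar> = \<bar>f y - f t - D * (y - t)\<bar>"
        using False by (simp add: abs_mult[symmetric] field_simps)
      finally show ?thesis .
    qed simp
  qed
qed

lemma growth1d:
  fixes f :: "real \<Rightarrow> real"
  assumes lip: "L-lipschitz_on UNIV f" and N: "negligible N" and M: "M \<ge> 0"
    and der: "\<And>t. t \<in> {0..1} \<Longrightarrow> t \<notin> N \<Longrightarrow> \<exists>D. (f has_real_derivative D) (at t) \<and> D \<le> M"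
  shows "f 1 - f 0 \<le> M"
proof -
  have L0: "L \<ge> 0" using lip lipschitz_on_nonneg by blast
  have key: "f 1 - f 0 \<le> M + e + L * \<eta>" if e: "e > 0" and eta: "\<eta> > 0" for e \<eta>
  proof -
    have Nl: "N \<in> sets lebesgue" using N negligible_imp_sets by blast
    obtain T where T: "open T" "N \<subseteq> T" "T - N \<in> lmeasurable" "emeasure lebesgue (T - N) < ennreal \<eta>"
      using sets_lebesgue_outer_open[OF Nl eta] by blast
    define U where "U = T \<inter> {-1<..<2::real}"
    have Uo: "open U" unfolding U_def using T(1) by auto
    have Ub: "U \<in> lmeasurable" unfolding U_def
      by (rule bounded_set_imp_lmeasurable) (use T(1) in \<open>auto intro: bounded_Int simp: borel_open\<close>)
    have NU: "N \<inter> {0..1} \<subseteq> U" using T(2) unfolding U_def by auto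
    have Umeas: "measure lebesgue U \<le> \<eta>"
    proof -
      have "U \<subseteq> (T - N) \<union> N" unfolding U_def by auto
      have "measure lebesgue U \<le> measure lebesgue ((T - N) \<union> N)"
      proof (rule measure_mono_fmeasurable[OF \<open>U \<subseteq> (T - N) \<union> N\<close>])
        show "U \<in> sets lebesgue" using Ub by (rule fmeasurableD)
        show "(T - N) \<union> N \<in> lmeasurable"
          using T(3) negligible_imp_measurable[OF N] by (rule fmeasurable.Un)
      qed
      also have "\<dots> \<le> measure lebesgue (T - N) + measure lebesgue N"
        by (rule measure_Un_le) (use T(3) N negligible_imp_sets in auto)
      also have "measure lebesgue N = 0" using N negligible_imp_measure0 by blast
      also have "measure lebesgue (T - N) \<le> \<eta>"
        using T(4) T(3) eta by (simp add: measure_def enn2real_leI less_imp_le)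
      finally show ?thesis by simp
    qed
    have Ui: "U \<inter> {..c} \<in> lmeasurable" for c
      using fmeasurable_Int_fmeasurable[OF Ub, of "{..c}"] by simp
    define mu where "mu t = measure lebesgue (U \<inter> {..t})" for t
    have mu_diff: "mu b - mu a = measure lebesgue (U \<inter> {a<..b})" if "a \<le> b" for a b
    proof -
      have "U \<inter> {a<..b} = (U \<inter> {..b}) - (U \<inter> {..a})" using that by auto
      moreover have "measure lebesgue ((U \<inter> {..b}) - (U \<inter> {..a})) = measure lebesgue (U \<inter> {..b}) - measure lebesgue (U \<inter> {..a})"
        apply (rule measure_Diff)
        using Ui[of b] Ui[of a] that by (auto simp: fmeasurable_def)
      ultimately show ?thesis unfolding mu_def by simp
    qed
    have mu_mono: "mu a \<le> mu b" if "a \<le> b" for a b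
      using mu_diff[OF that] measure_nonneg[of lebesgue "U \<inter> {a<..b}"] by linarith
    define G where "G t = f t - (M + e) * t - L * mu t" for t
    have "G 0 \<ge> G 1"
    proof (rule Bolzano[of 0 1 "\<lambda>a b. G b \<le> G a"])
      show "(0::real) \<le> 1" by simp
    next
      fix a b c :: real assume "G b \<le> G a" "G c \<le> G b" then show "G c \<le> G a" by linarith
    next
      fix x :: real assume local: "0 \<le> x" "x \<le> 1"
      show "\<exists>d>0. \<forall>a b. a \<le> x \<and> x \<le> b \<and> b - a < d \<longrightarrow> G b \<le> G a"
      proof (cases "x \<in> N")
        case True
        with local NU have "x \<in> U" by auto
        with Uo obtain d where d: "d > 0" "ball x d \<subseteq> U" by (meson openE)
        show ?thesis
        proof (intro exI[of _ d] conjI allI impI d(1))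
          fix a b assume ab: "a \<le> x \<and> x \<le> b \<and> b - a < d"
          have "{a<..b} \<subseteq> ball x d" using ab by (auto simp: dist_real_def)
          then have "{a<..b} \<subseteq> U" using d(2) by (rule order_trans)
          then have "U \<inter> {a<..b} = {a<..b}" by blast
          then have mu1: "mu b - mu a = b - a" using mu_diff[of a b] ab by simp
          have f1: "f b - f a \<le> L * (b - a)"
            using lipschitz_onD[OF lip, of b a] ab by (simp add: dist_real_def)
          have Gd: "G b - G a = (f b - f a) - (M + e) * (b - a) - L * (mu b - mu a)"
            unfolding G_def by (simp add: algebra_simps)
          have "(M + e) * (b - a) \<ge> 0" using M e ab by simp
          then show "G b \<le> G a" using Gd mu1 f1 by simp
        qed
      next
        case False
        then obtain D where D: "(f has_real_derivative D) (at x)" "D \<le> M" using der local by auto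
        obtain d where d: "d > 0" "\<And>y. \<bar>y - x\<bar> < d \<Longrightarrow> \<bar>f y - f x - D * (y - x)\<bar> \<le> e * \<bar>y - x\<bar>"
          using deriv_local_bound[OF D(1) e] by blast
        show ?thesis
        proof (intro exI[of _ d] conjI allI impI d(1))
          fix a b assume ab: "a \<le> x \<and> x \<le> b \<and> b - a < d"
          have bx: "\<bar>b - x\<bar> < d" "\<bar>a - x\<bar> < d" using ab by auto
          have 1: "f b - f x \<le> D * (b - x) + e * (b - x)" using d(2)[OF bx(1)] ab by (simp add: abs_le_iff)
          have 2: "f x - f a \<le> D * (x - a) + e * (x - a)" using d(2)[OF bx(2)] ab by (simp add: abs_le_iff abs_minus_commute algebra_simps)
          have "f b - f a \<le> (D + e) * (b - a)" using 1 2 by (simp add: algebra_simps)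
          also have "\<dots> \<le> (M + e) * (b - a)" using D(2) ab by (intro mult_right_mono) auto
          finally have fb: "f b - f a \<le> (M + e) * (b - a)" .
          have "mu a \<le> mu b" using ab by (intro mu_mono) auto
          then have "L * (mu b - mu a) \<ge> 0" using L0 by simp
          moreover have Gd: "G b - G a = (f b - f a) - (M + e) * (b - a) - L * (mu b - mu a)"
            unfolding G_def by (simp add: algebra_simps)
          ultimately show "G b \<le> G a" using fb by linarith
        qed
      qed
    qed
    moreover have "mu 1 - mu 0 \<le> \<eta>"
    proof -
      have "mu 1 - mu 0 = measure lebesgue (U \<inter> {0<..1})" by (rule mu_diff) simp
      also have "\<dots> \<le> measure lebesgue U"
        by (rule measure_mono_fmeasurable[OF Int_lower1 fmeasurableD[OF fmeasurable_Int_fmeasurable[OF Ub]] Ub]) simp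
      finally show ?thesis using Umeas by simp
    qed
    have "f 1 - f 0 \<le> M + e + L * (mu 1 - mu 0)" using \<open>G 0 \<ge> G 1\<close> unfolding G_def by (simp add: algebra_simps)
    moreover have "L * (mu 1 - mu 0) \<le> L * \<eta>" using mult_left_mono[OF \<open>mu 1 - mu 0 \<le> \<eta>\<close> L0] .
    ultimately show ?thesis by linarith
  qed
  show ?thesis
  proof (rule field_le_epsilon)
    fix e :: real assume e: "e > 0"
    show "f 1 - f 0 \<le> M + e"
    proof -
      have "f 1 - f 0 \<le> M + e/2 + L * (e / (2 * (L + 1)))"
        using key[of "e/2" "e / (2 * (L + 1))"] e L0 by simp
      also have "L * (e / (2 * (L + 1))) \<le> e/2"
        using L0 e by (simp add: field_simps)
      finally show ?thesis by simp
    qed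
  qed
qed

lemma line_ae:
  fixes N :: "'a::euclidean_space set" and p v :: 'a
  assumes N: "N \<in> null_sets lebesgue" and d: "\<delta> > 0"
  shows "\<exists>z. norm z < \<delta> \<and> negligible {t::real. p + z + t *\<^sub>R v \<in> N}"
proof -
  obtain N' where N': "N' \<in> null_sets lborel" "N \<subseteq> N'"
    using null_sets_completion_iff2[THEN iffD1, OF N] by blast
  have N'b: "N' \<in> sets borel" using N'(1) by (simp add: null_sets_def)
  have PI: "pair_sigma_finite (lborel::real measure) (lborel::'a measure)"
    unfolding pair_sigma_finite_def by (intro conjI lborel.sigma_finite_measure_axioms)
  have tr: "AE z in lborel. p + z + t *\<^sub>R v \<notin> N'" for t
  proof -
    have "emeasure lborel ((+) (p + t *\<^sub>R v) -` N') = emeasure (distr lborel borel ((+) (p + t *\<^sub>R v))) N'"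
      using N'b by (subst emeasure_distr) auto
    also have "\<dots> = 0" using N'(1) unfolding lborel_distr_plus by (simp add: null_sets_def)
    finally have "(+) (p + t *\<^sub>R v) -` N' \<in> null_sets lborel"
      using N'b measurable_sets_borel[OF _ N'b, of "(+) (p + t *\<^sub>R v)"] by (simp add: null_sets_def)
    then show ?thesis
      by (rule AE_I') (auto simp: algebra_simps)
  qed
  have meas: "{x \<in> space (lborel \<Otimes>\<^sub>M lborel). p + snd x + fst x *\<^sub>R v \<notin> N'} \<in> sets ((lborel::real measure) \<Otimes>\<^sub>M (lborel::'a measure))"
    using N'b by measurable
  have "AE z in lborel. AE t in lborel. p + z + t *\<^sub>R v \<notin> N'"
    using pair_sigma_finite.AE_commute[OF PI meas] tr by simp
  then have "AE z in lebesgue. AE t in lborel. p + z + t *\<^sub>R v \<notin> N'"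
    by (rule AE_completion)
  then obtain Z where Z0: "{z\<in>space lebesgue. \<not> (AE t in lborel. p + z + t *\<^sub>R v \<notin> N')} \<subseteq> Z" "Z \<in> null_sets lebesgue"
    by (rule AE_E) (simp add: null_sets_def)
  have Z: "Z \<in> null_sets lebesgue" "{z. \<not> (AE t in lborel. p + z + t *\<^sub>R v \<notin> N')} \<subseteq> Z"
    using Z0 by auto
  have "\<not> ball 0 \<delta> \<subseteq> Z"
  proof
    assume "ball 0 \<delta> \<subseteq> Z"
    then have "negligible (ball (0::'a) \<delta>)"
      using Z(1) negligible_iff_null_sets negligible_subset by blast
    moreover have "ball (0::'a) \<delta> \<noteq> {}" using d by simp
    ultimately show False using open_not_negligible[of "ball (0::'a) \<delta>"] by simp
  qed
  then obtain z where z: "norm z < \<delta>" "AE t in lborel. p + z + t *\<^sub>R v \<notin> N'"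
  proof -
    from \<open>\<not> ball 0 \<delta> \<subseteq> Z\<close> obtain z where "z \<in> ball 0 \<delta>" "z \<notin> Z" by blast
    then show ?thesis using Z(2) that by auto
  qed
  from z(2) obtain T where T0: "{t\<in>space lborel. \<not> p + z + t *\<^sub>R v \<notin> N'} \<subseteq> T" "T \<in> null_sets lborel"
    by (rule AE_E) (simp add: null_sets_def)
  have T: "T \<in> null_sets lborel" "{t. p + z + t *\<^sub>R v \<in> N'} \<subseteq> T" using T0 by auto
  have "negligible T" using T(1) null_sets_completionI negligible_iff_null_sets by blast
  then have "negligible {t. p + z + t *\<^sub>R v \<in> N}"
    by (rule negligible_subset) (use T(2) N'(2) in auto)
  with z show ?thesis by blast
qed

lemma segment_bound:
  fixes w :: "real \<times> (real ^ 'm) \<Rightarrow> real"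
  assumes adm: "admissible q \<kappa> w" and M: "M \<ge> 0" and dl: "\<delta> > 0"
    and g: "\<And>z t. norm z < \<delta> \<Longrightarrow> t \<in> {0..1} \<Longrightarrow> gfac q \<kappa> (p + z + t *\<^sub>R v) \<le> M^2"
  shows "w p - w (p + v) \<le> M * norm v"
proof -
  obtain C where lipC: "C-lipschitz_on UNIV w" using adm unfolding admissible_def by blast
  have C0: "C \<ge> 0" using lipC lipschitz_on_nonneg by blast
  have ae: "AE x in lebesgue. w differentiable (at x) \<and>
        (\<forall>D. (w has_derivative D) (at x) \<longrightarrow> (\<forall>v. \<bar>D v\<bar> \<le> sqrt (gfac q \<kappa> x) * norm v))"
    using adm unfolding admissible_def by blast
  from ae obtain N where N0: "{x\<in>space lebesgue. \<not> (w differentiable (at x) \<and>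
        (\<forall>D. (w has_derivative D) (at x) \<longrightarrow> (\<forall>v. \<bar>D v\<bar> \<le> sqrt (gfac q \<kappa> x) * norm v)))} \<subseteq> N"
     "N \<in> null_sets lebesgue"
    by (rule AE_E) (simp add: null_sets_def)
  have good: "w differentiable (at x) \<and>
        (\<forall>D. (w has_derivative D) (at x) \<longrightarrow> (\<forall>v. \<bar>D v\<bar> \<le> sqrt (gfac q \<kappa> x) * norm v))"
    if "x \<notin> N" for x using N0(1) that by auto
  have main: "w p - w (p + v) \<le> M * norm v + 2 * C * \<eta>" if eta: "\<eta> > 0" for \<eta>
  proof -
    obtain z where z: "norm z < min \<delta> \<eta>" "negligible {t::real. p + z + t *\<^sub>R v \<in> N}"
      using line_ae[OF N0(2), of "min \<delta> \<eta>" p v] dl eta by auto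
    define f where "f t = - w (p + z + t *\<^sub>R v)" for t
    have lipf: "(C * norm v)-lipschitz_on UNIV f"
    proof (rule lipschitz_onI)
      fix s t :: real
      have "dist (f s) (f t) = dist (w (p + z + s *\<^sub>R v)) (w (p + z + t *\<^sub>R v))"
        unfolding f_def by (simp add: dist_real_def abs_minus_commute)
      also have "\<dots> \<le> C * dist (p + z + s *\<^sub>R v) (p + z + t *\<^sub>R v)"
        using lipschitz_onD[OF lipC] by blast
      also have "dist (p + z + s *\<^sub>R v) (p + z + t *\<^sub>R v) = \<bar>s - t\<bar> * norm v"
        by (simp add: dist_norm scaleR_diff_left[symmetric])
      finally show "dist (f s) (f t) \<le> C * norm v * dist s t"
        by (simp add: dist_real_def mult.assoc mult.commute mult.left_commute)
    next
      show "0 \<le> C * norm v" using C0 by simp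
    qed
    have der: "\<exists>D. (f has_real_derivative D) (at t) \<and> D \<le> M * norm v"
      if t: "t \<in> {0..1}" "t \<notin> {t::real. p + z + t *\<^sub>R v \<in> N}" for t
    proof -
      define x where "x = p + z + t *\<^sub>R v"
      have xN: "x \<notin> N" using t unfolding x_def by simp
      obtain D where D: "(w has_derivative D) (at x)"
        using good[OF xN] unfolding differentiable_def by blast
      have Dv: "\<bar>D v\<bar> \<le> sqrt (gfac q \<kappa> x) * norm v" using good[OF xN] D by blast
      have "gfac q \<kappa> x \<le> M^2" unfolding x_def using g[of z t] z t dl by auto
      then have "sqrt (gfac q \<kappa> x) \<le> M" using M real_sqrt_le_iff[of "gfac q \<kappa> x" "M^2"] by simp
      then have Dv2: "- D v \<le> M * norm v" using Dv
        by (smt (verit) mult_right_mono norm_ge_zero)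
      have lin: "linear D" using D has_derivative_linear by blast
      have l1: "((\<lambda>t. p + z + t *\<^sub>R v) has_derivative (\<lambda>s. s *\<^sub>R v)) (at t)"
        by (auto intro!: derivative_eq_intros)
      have "((\<lambda>t. w (p + z + t *\<^sub>R v)) has_derivative (\<lambda>s. D (s *\<^sub>R v))) (at t)"
        using has_derivative_compose[OF l1, of w D] D unfolding x_def by simp
      then have "(f has_derivative (\<lambda>s. - D (s *\<^sub>R v))) (at t)"
        unfolding f_def by (rule has_derivative_minus)
      moreover have "(\<lambda>s. - D (s *\<^sub>R v)) = (*) (- D v)"
        using linear_scale[OF lin] by (auto simp: fun_eq_iff)
      ultimately have "(f has_real_derivative (- D v)) (at t)"
        unfolding has_field_derivative_def by simp
      with Dv2 show ?thesis by blast
    qed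
    have "f 1 - f 0 \<le> M * norm v"
      by (rule growth1d[OF lipf z(2)]) (use M der in auto)
    then have A: "w (p + z) - w (p + z + v) \<le> M * norm v" unfolding f_def by simp
    have B: "\<bar>w p - w (p + z)\<bar> \<le> C * norm z"
      using lipschitz_onD[OF lipC, of p "p + z"] by (simp add: dist_real_def dist_norm)
    have B2: "\<bar>w (p + v) - w (p + z + v)\<bar> \<le> C * norm z"
      using lipschitz_onD[OF lipC, of "p + v" "p + z + v"] by (simp add: dist_real_def dist_norm)
    have "C * norm z \<le> C * \<eta>" using z(1) C0 by (intro mult_left_mono) auto
    then show ?thesis using A B B2 by linarith
  qed
  show ?thesis
  proof (rule field_le_epsilon)
    fix e :: real assume e: "e > 0"
    have "w p - w (p + v) \<le> M * norm v + 2 * C * (e / (2 * C + 1))"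
      using main[of "e / (2 * C + 1)"] e C0 by simp
    also have "2 * C * (e / (2 * C + 1)) \<le> e" using C0 e by (simp add: field_simps)
    finally show "w p - w (p + v) \<le> M * norm v + e" by simp
  qed
qed

lemma density_bad_neg:
  fixes Op :: "real set" and \<epsilon> :: real
  assumes Oo: "open Op" and eps: "\<epsilon> > 0"
  shows "negligible {t. t \<notin> Op \<and> (\<forall>d>0. \<exists>r. 0 < r \<and> r < d \<and> measure lebesgue (Op \<inter> cball t r) > \<epsilon> * r)}"
    (is "negligible ?B")
proof -
  have Ol: "Op \<in> sets lebesgue" using Oo by simp
  show ?thesis unfolding negligible_outer_le
  proof (intro allI impI)
    fix \<eta> :: real assume eta: "\<eta> > 0"
    obtain C where C: "closed C" "C \<subseteq> Op" "Op - C \<in> lmeasurable" "emeasure lebesgue (Op - C) < ennreal (\<epsilon> * \<eta> / 2)"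
      using sets_lebesgue_inner_closed[OF Ol, of "\<epsilon> * \<eta> / 2"] eta eps by auto
    define K where "K = {(t,r). t \<in> ?B \<and> 0 < r \<and> cball t r \<subseteq> - C \<and> measure lebesgue (Op \<inter> cball t r) > \<epsilon> * r}"
    have cover: "\<exists>i. i \<in> K \<and> x \<in> cball (fst i) (snd i) \<and> snd i < d" if x: "x \<in> ?B" and d: "0 < d" for x d
    proof -
      have "x \<notin> C" using x C(2) by auto
      moreover have "open (- C)" using C(1) by auto
      ultimately obtain \<rho> where rho: "\<rho> > 0" "ball x \<rho> \<subseteq> - C" by (meson ComplI openE)
      obtain r where r: "0 < r" "r < min d (\<rho>/2)" "measure lebesgue (Op \<inter> cball x r) > \<epsilon> * r"
      proof -
        have "min d (\<rho>/2) > 0" using rho d by simp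
        then show ?thesis using x that by blast
      qed
      have "cball x r \<subseteq> ball x \<rho>" using r rho by (intro cball_subset_ball_iff[THEN iffD2]) auto
      then have "cball x r \<subseteq> - C" using rho(2) by blast
      then have "(x, r) \<in> K" unfolding K_def using x r by auto
      then show ?thesis using r by (intro exI[of _ "(x, r)"]) auto
    qed
    obtain D where D: "countable D" "D \<subseteq> K"
        "pairwise (\<lambda>i j. disjnt (cball (fst i) (snd i)) (cball (fst j) (snd j))) D"
        "negligible (?B - (\<Union>i\<in>D. cball (fst i) (snd i)))"
    proof (rule Vitali_covering_theorem_cballs[of K snd ?B fst])
      show "\<And>i. i \<in> K \<Longrightarrow> 0 < snd i" unfolding K_def by auto
      show "\<And>x d. x \<in> ?B \<Longrightarrow> 0 < d \<Longrightarrow> \<exists>i. i \<in> K \<and> x \<in> cball (fst i) (snd i) \<and> snd i < d"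
        by (rule cover)
    qed
    define U where "U = (\<Union>i\<in>D. cball (fst i) (snd i))"
    have disj: "disjoint_family_on (\<lambda>i. cball (fst i) (snd i)) D"
      using D(3) unfolding disjoint_family_on_def pairwise_def disjnt_def by blast
    have disj2: "disjoint_family_on (\<lambda>i. Op \<inter> cball (fst i) (snd i)) D"
      using disj unfolding disjoint_family_on_def by blast
    have Us: "U \<in> sets lebesgue" unfolding U_def
      by (rule sets.countable_UN'[OF D(1)]) auto
    have eU: "emeasure lebesgue U = (\<integral>\<^sup>+i. emeasure lebesgue (cball (fst i) (snd i)) \<partial>count_space D)"
      unfolding U_def by (rule emeasure_UN_countable[OF _ D(1) disj]) auto
    have each: "emeasure lebesgue (cball (fst i) (snd i)) \<le> ennreal (2 / \<epsilon>) * emeasure lebesgue (Op \<inter> cball (fst i) (snd i))"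
      if i: "i \<in> D" for i
    proof -
      obtain t r where tr: "i = (t, r)" by force
      have iK: "0 < r" "measure lebesgue (Op \<inter> cball t r) > \<epsilon> * r" using i D(2) tr unfolding K_def by auto
      have m1: "emeasure lebesgue (cball t r) = ennreal (2 * r)"
        using iK by (simp add: cball_eq_atLeastAtMost)
      have fm: "Op \<inter> cball t r \<in> lmeasurable"
      proof -
        have "cball t r \<inter> Op \<in> lmeasurable"
          by (rule fmeasurable_Int_fmeasurable[OF _ Ol]) simp
        then show ?thesis by (simp add: Int_commute)
      qed
      have m2: "emeasure lebesgue (Op \<inter> cball t r) = ennreal (measure lebesgue (Op \<inter> cball t r))"
        using fm by (simp add: emeasure_eq_measure2)
      have "2 * r \<le> 2 / \<epsilon> * measure lebesgue (Op \<inter> cball t r)"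
        using iK eps by (simp add: field_simps)
      then have "ennreal (2 * r) \<le> ennreal (2 / \<epsilon> * measure lebesgue (Op \<inter> cball t r))"
        by (rule ennreal_leI)
      also have "\<dots> = ennreal (2 / \<epsilon>) * ennreal (measure lebesgue (Op \<inter> cball t r))"
        using eps by (intro ennreal_mult) auto
      finally show ?thesis using m1 m2 tr by simp
    qed
    have "emeasure lebesgue U \<le> (\<integral>\<^sup>+i. ennreal (2 / \<epsilon>) * emeasure lebesgue (Op \<inter> cball (fst i) (snd i)) \<partial>count_space D)"
      unfolding eU by (rule nn_integral_mono) (use each in auto)
    also have "\<dots> = ennreal (2 / \<epsilon>) * (\<integral>\<^sup>+i. emeasure lebesgue (Op \<inter> cball (fst i) (snd i)) \<partial>count_space D)"
      by (rule nn_integral_cmult) simp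
    also have "(\<integral>\<^sup>+i. emeasure lebesgue (Op \<inter> cball (fst i) (snd i)) \<partial>count_space D) = emeasure lebesgue (\<Union>i\<in>D. Op \<inter> cball (fst i) (snd i))"
      by (rule emeasure_UN_countable[OF _ D(1) disj2, symmetric]) (use Ol in auto)
    also have "\<dots> \<le> emeasure lebesgue (Op - C)"
    proof (rule emeasure_mono)
      show "(\<Union>i\<in>D. Op \<inter> cball (fst i) (snd i)) \<subseteq> Op - C"
      proof -
        have "cball (fst i) (snd i) \<subseteq> - C" if "i \<in> D" for i
        proof -
          have "i \<in> K" using that D(2) by blast
          then show ?thesis unfolding K_def by (cases i) simp
        qed
        then show ?thesis by blast
      qed
    qed (use C(3) in auto)
    also have "ennreal (2 / \<epsilon>) * emeasure lebesgue (Op - C) \<le> ennreal (2 / \<epsilon>) * ennreal (\<epsilon> * \<eta> / 2)"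
      using C(4) by (intro mult_left_mono) auto
    also have "\<dots> = ennreal \<eta>" using eps eta by (simp add: ennreal_mult[symmetric])
    finally have eUb: "emeasure lebesgue U \<le> ennreal \<eta>" by (simp add: mult_left_mono)
    have Ufm: "U \<in> lmeasurable" using Us eUb by (intro fmeasurableI) (auto simp: top_unique intro: le_less_trans)
    have mU: "measure lebesgue U \<le> \<eta>"
      using eUb Ufm eta by (simp add: emeasure_eq_measure2)
    have N0: "negligible (?B - U)" using D(4) unfolding U_def .
    show "\<exists>T. ?B \<subseteq> T \<and> T \<in> lmeasurable \<and> measure lebesgue T \<le> \<eta>"
    proof (intro exI conjI)
      show "?B \<subseteq> (?B - U) \<union> U" by blast
      show "(?B - U) \<union> U \<in> lmeasurable"
        using negligible_imp_measurable[OF N0] Ufm by (rule fmeasurable.Un)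
      have "measure lebesgue ((?B - U) \<union> U) \<le> measure lebesgue (?B - U) + measure lebesgue U"
        by (rule measure_Un_le) (use negligible_imp_sets[OF N0] Us in auto)
      then show "measure lebesgue ((?B - U) \<union> U) \<le> \<eta>"
        using negligible_imp_measure0[OF N0] mU by linarith
    qed
  qed
qed

definition phi :: "real set \<Rightarrow> real \<Rightarrow> real" where
  "phi Op t = measure lebesgue (({0..1} - Op) \<inter> {..t})"

lemma lmeas_Ioc [simp]: "{a<..b::real} \<in> lmeasurable"
proof (rule bounded_set_imp_lmeasurable)
  show "bounded {a<..b}" by (rule bounded_subset[of "{a..b}"]) auto
qed simp

lemma phi_meas:
  fixes Op :: "real set"
  assumes "open Op" "S \<in> sets lebesgue"
  shows "({0..1} - Op) \<inter> S \<in> lmeasurable"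
proof -
  have "Op \<in> sets lebesgue" using assms(1) by simp
  then have "({0..1} - Op) \<inter> S \<in> sets lebesgue" using assms(2) lmeasurable_interval(1)[of 0 1, THEN fmeasurableD] by (intro sets.Int sets.Diff)
  moreover have "bounded (({0..1} - Op) \<inter> S)" by (rule bounded_subset[of "{0..1}"]) auto
  ultimately show ?thesis by (intro bounded_set_imp_lmeasurable)
qed

lemma phi_diff:
  assumes "open Op" "a \<le> b"
  shows "phi Op b - phi Op a = measure lebesgue (({0..1} - Op) \<inter> {a<..b})"
proof -
  have "({0..1} - Op) \<inter> {a<..b} = (({0..1} - Op) \<inter> {..b}) - (({0..1} - Op) \<inter> {..a})" using assms by auto
  moreover have "measure lebesgue ((({0..1} - Op) \<inter> {..b}) - (({0..1} - Op) \<inter> {..a})) =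
      measure lebesgue (({0..1} - Op) \<inter> {..b}) - measure lebesgue (({0..1} - Op) \<inter> {..a})"
    apply (rule measurable_measure_Diff)
    using phi_meas[OF assms(1), of "{..b}"] phi_meas[OF assms(1), of "{..a}"] assms(2)
    by (auto simp: fmeasurableD)
  ultimately show ?thesis unfolding phi_def by simp
qed

lemma phi_diff_bounds:
  assumes "open Op" "a \<le> b"
  shows "0 \<le> phi Op b - phi Op a" "phi Op b - phi Op a \<le> b - a"
proof -
  show "0 \<le> phi Op b - phi Op a" using phi_diff[OF assms] by simp
  have "measure lebesgue (({0..1} - Op) \<inter> {a<..b}) \<le> measure lebesgue {a<..b}"
    by (rule measure_mono_fmeasurable) (use assms in auto)
  then show "phi Op b - phi Op a \<le> b - a" using phi_diff[OF assms] assms by simp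
qed

lemma phi_lip:
  assumes "open Op"
  shows "\<bar>phi Op b - phi Op a\<bar> \<le> \<bar>b - a\<bar>"
proof (cases "a \<le> b")
  case True then show ?thesis using phi_diff_bounds[OF assms True] by simp
next
  case False then show ?thesis using phi_diff_bounds[OF assms, of b a] by simp
qed

lemma phi_diff2:
  assumes "open Op" "0 \<le> a" "a \<le> b" "b \<le> 1"
  shows "phi Op b - phi Op a = (b - a) - measure lebesgue (Op \<inter> {a<..b})"
proof -
  have "({0..1} - Op) \<inter> {a<..b} = {a<..b} - (Op \<inter> {a<..b})" using assms by auto
  moreover have "measure lebesgue ({a<..b} - (Op \<inter> {a<..b})) = measure lebesgue {a<..b} - measure lebesgue (Op \<inter> {a<..b})"
    by (rule measurable_measure_Diff) (use assms in auto)
  ultimately show ?thesis using phi_diff[OF assms(1,3)] assms by simp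
qed

lemma phi_deriv0:
  assumes "open Op" "\<rho> > 0" "\<And>s. \<bar>s - t\<bar> < \<rho> \<Longrightarrow> s \<notin> {0..1} - Op"
  shows "(phi Op has_real_derivative 0) (at t)"
proof (rule has_field_derivative_transform_within_open[of "\<lambda>_. phi Op t" 0 t "ball t \<rho>"])
  show "((\<lambda>_. phi Op t) has_real_derivative 0) (at t)" by simp
  show "open (ball t \<rho>)" by simp
  show "t \<in> ball t \<rho>" using assms(2) by simp
  fix x assume x: "x \<in> ball t \<rho>"
  have "({0..1} - Op) \<inter> {min x t<..max x t} = {}"
    using x assms(3) by (auto simp: dist_real_def)
  then have "phi Op (max x t) - phi Op (min x t) = 0"
    using phi_diff[OF assms(1), of "min x t" "max x t"] by simp
  then show "phi Op t = phi Op x" by (cases "x \<le> t") (auto simp: max_def min_def)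
qed

lemma phi_deriv1:
  assumes Oo: "open Op" and t: "t \<notin> Op" "0 < t" "t < 1"
    and good: "\<forall>e>0. \<exists>d>0. \<forall>r. 0 < r \<and> r < d \<longrightarrow> measure lebesgue (Op \<inter> cball t r) \<le> e * r"
  shows "(phi Op has_real_derivative 1) (at t)"
proof -
  have Os: "Op \<in> sets lebesgue" using Oo by simp
  have fmc: "Op \<inter> cball t r \<in> lmeasurable" for r
  proof -
    have "cball t r \<inter> Op \<in> lmeasurable" by (rule fmeasurable_Int_fmeasurable[OF _ Os]) simp
    then show ?thesis by (simp add: Int_commute)
  qed
  have mI: "Op \<inter> {a<..b} \<in> sets lebesgue" for a b
    using Os lmeas_Ioc[of a b, THEN fmeasurableD] by (rule sets.Int)
  have "((\<lambda>y. (phi Op y - phi Op t) / (y - t)) \<longlongrightarrow> 1) (at t)"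
  proof (rule tendstoI)
    fix e :: real assume e: "e > 0"
    obtain d where d: "d > 0" "\<And>r. 0 < r \<Longrightarrow> r < d \<Longrightarrow> measure lebesgue (Op \<inter> cball t r) \<le> (e/2) * r"
      using good e by (meson half_gt_zero)
    define d' where "d' = min d (min t (1 - t))"
    have d'0: "d' > 0" using d t unfolding d'_def by simp
    have "\<forall>y. y \<noteq> t \<and> dist y t < d' \<longrightarrow> dist ((phi Op y - phi Op t) / (y - t)) 1 < e"
    proof (intro allI impI)
      fix y assume y: "y \<noteq> t \<and> dist y t < d'"
      define r where "r = \<bar>y - t\<bar>"
      have yt0: "y \<noteq> t" "\<bar>y - t\<bar> < d'" using y by (auto simp: dist_real_def)
      have dd: "d' \<le> d" "d' \<le> t" "d' \<le> 1 - t" unfolding d'_def by auto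
      have ylim: "0 < y" "y < 1" using yt0 dd by linarith+
      have r0: "0 < r" "r < d" using yt0 dd unfolding r_def by auto
      have mb: "measure lebesgue (Op \<inter> cball t r) \<le> (e/2) * r" using d(2) r0 by blast
      have cl: "\<bar>(phi Op y - phi Op t) - (y - t)\<bar> \<le> measure lebesgue (Op \<inter> cball t r)"
      proof (cases "t < y")
        case True
        have "phi Op y - phi Op t = (y - t) - measure lebesgue (Op \<inter> {t<..y})"
          using phi_diff2[OF Oo, of t y] True ylim t by simp
        moreover have "measure lebesgue (Op \<inter> {t<..y}) \<le> measure lebesgue (Op \<inter> cball t r)"
        proof (rule measure_mono_fmeasurable[OF _ mI fmc])
          show "Op \<inter> {t<..y} \<subseteq> Op \<inter> cball t r" using True by (auto simp: r_def dist_real_def)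
        qed
        ultimately show ?thesis by simp
      next
        case False
        then have yt: "y < t" using y by auto
        have "phi Op t - phi Op y = (t - y) - measure lebesgue (Op \<inter> {y<..t})"
          using phi_diff2[OF Oo, of y t] yt ylim t by simp
        moreover have "measure lebesgue (Op \<inter> {y<..t}) \<le> measure lebesgue (Op \<inter> cball t r)"
        proof (rule measure_mono_fmeasurable[OF _ mI fmc])
          show "Op \<inter> {y<..t} \<subseteq> Op \<inter> cball t r" using yt by (auto simp: r_def dist_real_def)
        qed
        ultimately have "phi Op y - phi Op t - (y - t) = measure lebesgue (Op \<inter> {y<..t})" by linarith
        then show ?thesis using \<open>measure lebesgue (Op \<inter> {y<..t}) \<le> measure lebesgue (Op \<inter> cball t r)\<close> by simp
      qed
      have "(phi Op y - phi Op t) / (y - t) - 1 = ((phi Op y - phi Op t) - (y - t)) / (y - t)"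
        using yt0(1) by (simp add: diff_divide_distrib)
      then have "\<bar>(phi Op y - phi Op t) / (y - t) - 1\<bar> = \<bar>(phi Op y - phi Op t) - (y - t)\<bar> / r"
        unfolding r_def by (simp add: abs_divide)
      also have "\<dots> \<le> (e/2) * r / r" using cl mb r0 by (intro divide_right_mono) auto
      also have "\<dots> < e" using r0 e by simp
      finally show "dist ((phi Op y - phi Op t) / (y - t)) 1 < e" by (simp add: dist_real_def)
    qed
    then show "\<forall>\<^sub>F y in at t. dist ((phi Op y - phi Op t) / (y - t)) 1 < e"
      unfolding eventually_at using d'0 by blast
  qed
  then show ?thesis using has_field_derivative_iff by blast
qed

lemma phi_ae:
  assumes Oo: "open Op"
  shows "negligible {t. \<not> (\<exists>D. (phi Op has_real_derivative D) (at t) \<and> (D = 0 \<or> (D = 1 \<and> t \<notin> Op)))}"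
proof -
  define B where "B n = {t. t \<notin> Op \<and> (\<forall>d>0. \<exists>r. 0 < r \<and> r < d \<and> measure lebesgue (Op \<inter> cball t r) > (1 / Suc n) * r)}" for n
  have nB: "negligible (B n)" for n unfolding B_def by (rule density_bad_neg[OF Oo]) simp
  have "{t. \<not> (\<exists>D. (phi Op has_real_derivative D) (at t) \<and> (D = 0 \<or> (D = 1 \<and> t \<notin> Op)))} \<subseteq> {0, 1} \<union> (\<Union>n. B n)"
  proof
    fix t assume tb: "t \<in> {t. \<not> (\<exists>D. (phi Op has_real_derivative D) (at t) \<and> (D = 0 \<or> (D = 1 \<and> t \<notin> Op)))}"
    show "t \<in> {0, 1} \<union> (\<Union>n. B n)"
    proof (rule ccontr)
      assume nt: "t \<notin> {0, 1} \<union> (\<Union>n. B n)"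
      have "\<exists>D. (phi Op has_real_derivative D) (at t) \<and> (D = 0 \<or> (D = 1 \<and> t \<notin> Op))"
      proof (cases "t \<in> Op \<or> t < 0 \<or> t > 1")
        case True
        then obtain \<rho> where rho: "\<rho> > 0" "\<And>s. \<bar>s - t\<bar> < \<rho> \<Longrightarrow> s \<notin> {0..1} - Op"
        proof (elim disjE)
          assume "t \<in> Op"
          then obtain \<rho> where "\<rho> > 0" "ball t \<rho> \<subseteq> Op" using Oo openE by blast
          then show thesis using that[of \<rho>] by (auto simp: dist_real_def subset_eq)
        next
          assume t0: "t < 0" show thesis
          proof (rule that[of "-t"])
            show "-t > 0" using t0 by simp
            fix s assume "\<bar>s - t\<bar> < -t" then have "s < 0" by linarith
            then show "s \<notin> {0..1} - Op" by simp
          qed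
        next
          assume t1: "t > 1" show thesis
          proof (rule that[of "t - 1"])
            show "t - 1 > 0" using t1 by simp
            fix s assume "\<bar>s - t\<bar> < t - 1" then have "s > 1" by linarith
            then show "s \<notin> {0..1} - Op" by simp
          qed
        qed
        then show ?thesis using phi_deriv0[OF Oo rho] by blast
      next
        case False
        then have t: "t \<notin> Op" "0 < t" "t < 1" using nt by auto
        have "\<forall>e>0. \<exists>d>0. \<forall>r. 0 < r \<and> r < d \<longrightarrow> measure lebesgue (Op \<inter> cball t r) \<le> e * r"
        proof (intro allI impI)
          fix e :: real assume e: "e > 0"
          obtain n where n: "1 / Suc n < e" using e by (meson nat_approx_posE)
          have "t \<notin> B n" using nt by auto
          then have "\<not> (\<forall>d>0. \<exists>r. 0 < r \<and> r < d \<and> measure lebesgue (Op \<inter> cball t r) > (1 / Suc n) * r)"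
            using t(1) unfolding B_def by blast
          then obtain d where d0: "d > 0" and d1: "\<forall>r. \<not> (0 < r \<and> r < d \<and> measure lebesgue (Op \<inter> cball t r) > (1 / Suc n) * r)"
            by blast
          have d: "d > 0" "\<And>r. 0 < r \<Longrightarrow> r < d \<Longrightarrow> measure lebesgue (Op \<inter> cball t r) \<le> (1 / Suc n) * r"
            using d0 d1 not_less by blast+
          show "\<exists>d>0. \<forall>r. 0 < r \<and> r < d \<longrightarrow> measure lebesgue (Op \<inter> cball t r) \<le> e * r"
          proof (intro exI[of _ d] conjI allI impI d(1))
            fix r assume r: "0 < r \<and> r < d"
            have "(1 / Suc n) * r \<le> e * r" using n r by (intro mult_right_mono) auto
            then show "measure lebesgue (Op \<inter> cball t r) \<le> e * r" using d(2)[of r] r by linarith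
          qed
        qed
        then show ?thesis using phi_deriv1[OF Oo t] t(1) by blast
      qed
      then show False using tb by blast
    qed
  qed
  moreover have "negligible ({0, 1} \<union> (\<Union>n. B n))"
    using nB by (auto intro: negligible_Union_nat)
  ultimately show ?thesis by (rule negligible_subset[rotated])
qed

lemma open_O_set: "open (O_set q \<kappa>)"
  unfolding O_set_def by (auto intro!: open_UN)

lemma theta_cases: "theta q \<kappa> t = (if t \<in> O_set q \<kappa> then 1 else 2)"
  unfolding theta_def by simp

lemma gfac_le2: "gfac q \<kappa> x \<le> 2"
  unfolding gfac_def theta_cases by auto

lemma gfac_ge1: "gfac q \<kappa> x \<ge> 1"
  unfolding gfac_def theta_cases by auto

lemma gfac_notO: "fst x \<notin> O_set q \<kappa> \<Longrightarrow> gfac q \<kappa> x = 2"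
  unfolding gfac_def theta_cases by auto

lemma gfac_O: "x \<in> open_cube \<Longrightarrow> fst x \<in> O_set q \<kappa> \<Longrightarrow> gfac q \<kappa> x \<le> 1"
  unfolding gfac_def theta_cases by auto

lemma negligible_fst:
  fixes S :: "real set"
  assumes "negligible S"
  shows "negligible {x :: real \<times> 'b::euclidean_space. fst x \<in> S}"
proof -
  have "S \<in> null_sets (completion lborel)" using assms negligible_iff_null_sets by blast
  then obtain S' where S': "S' \<in> null_sets lborel" "S \<subseteq> S'"
    using null_sets_completion_iff2[THEN iffD1] by blast
  have "S' \<times> (UNIV :: 'b set) \<in> null_sets ((lborel::real measure) \<Otimes>\<^sub>M (lborel :: 'b measure))"
    by (rule lborel.times_in_null_sets1[OF S'(1)]) simp
  then have "S' \<times> (UNIV :: 'b set) \<in> null_sets (lborel :: (real \<times> 'b) measure)"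
    by (simp only: lborel_prod)
  then have "negligible (S' \<times> (UNIV :: 'b set))"
    using null_sets_completionI negligible_iff_null_sets by blast
  then show ?thesis by (rule negligible_subset) (use S'(2) in auto)
qed

lemma adm_w:
  fixes E :: "real ^ 'm" and A :: real
  assumes E1: "norm E \<le> 1" and AE2: "A^2 + (norm E)^2 \<le> 2"
  shows "admissible q \<kappa> (\<lambda>x. - (A * phi (O_set q \<kappa>) (fst x) + inner E (snd x)))"
proof -
  let ?Op = "O_set q \<kappa>"
  let ?w = "\<lambda>x::real \<times> (real^'m). - (A * phi ?Op (fst x) + inner E (snd x))"
  have Oo: "open ?Op" by (rule open_O_set)
  have lip: "(\<bar>A\<bar> + 1)-lipschitz_on UNIV ?w"
  proof (rule lipschitz_onI)
    fix x y :: "real \<times> (real^'m)"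
    have "dist (?w x) (?w y) = \<bar>A * (phi ?Op (fst x) - phi ?Op (fst y)) + inner E (snd x - snd y)\<bar>"
      by (simp add: dist_real_def inner_diff_right algebra_simps abs_minus_commute)
    also have "\<dots> \<le> \<bar>A\<bar> * \<bar>phi ?Op (fst x) - phi ?Op (fst y)\<bar> + \<bar>inner E (snd x - snd y)\<bar>"
      by (simp add: abs_mult[symmetric] abs_triangle_ineq)
    finally have s1: "dist (?w x) (?w y) \<le> \<bar>A\<bar> * \<bar>phi ?Op (fst x) - phi ?Op (fst y)\<bar> + \<bar>inner E (snd x - snd y)\<bar>" .
    have s2: "\<bar>phi ?Op (fst x) - phi ?Op (fst y)\<bar> \<le> norm (x - y)"
    proof -
      have "\<bar>phi ?Op (fst x) - phi ?Op (fst y)\<bar> \<le> \<bar>fst x - fst y\<bar>" by (rule phi_lip[OF Oo])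
      also have "\<bar>fst x - fst y\<bar> \<le> norm (x - y)"
      proof -
        have "norm (fst (x - y)) \<le> norm (x - y)"
          using norm_fst_le[of "fst (x - y)" "snd (x - y)"] by (simp only: prod.collapse)
        then show ?thesis by simp
      qed
      finally show ?thesis .
    qed
    have s3: "\<bar>inner E (snd x - snd y)\<bar> \<le> norm (x - y)"
    proof -
      have "norm (snd (x - y)) \<le> norm (x - y)"
        using norm_snd_le[of "snd (x - y)" "fst (x - y)"] by (simp only: prod.collapse)
      then have "norm (snd x - snd y) \<le> norm (x - y)" by simp
      moreover have "\<bar>inner E (snd x - snd y)\<bar> \<le> norm E * norm (snd x - snd y)" by (rule Cauchy_Schwarz_ineq2)
      moreover have "norm E * norm (snd x - snd y) \<le> 1 * norm (snd x - snd y)" using E1 by (intro mult_right_mono) auto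
      ultimately show ?thesis by linarith
    qed
    have s4: "\<bar>A\<bar> * \<bar>phi ?Op (fst x) - phi ?Op (fst y)\<bar> \<le> \<bar>A\<bar> * norm (x - y)"
      using s2 by (intro mult_left_mono) auto
    show "dist (?w x) (?w y) \<le> (\<bar>A\<bar> + 1) * dist x y"
      using s1 s3 s4 by (simp add: dist_norm algebra_simps)
  qed simp
  define Bad where "Bad = {t. \<not> (\<exists>D. (phi ?Op has_real_derivative D) (at t) \<and> (D = 0 \<or> (D = 1 \<and> t \<notin> ?Op)))}"
  have nB: "negligible {x :: real \<times> (real^'m). fst x \<in> Bad}"
    unfolding Bad_def by (rule negligible_fst[OF phi_ae[OF Oo]])
  have good: "?w differentiable (at x) \<and>
        (\<forall>D. (?w has_derivative D) (at x) \<longrightarrow> (\<forall>v. \<bar>D v\<bar> \<le> sqrt (gfac q \<kappa> x) * norm v))"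
    if x: "fst x \<notin> Bad" for x
  proof -
    obtain Dp where Dp: "(phi ?Op has_real_derivative Dp) (at (fst x))" "Dp = 0 \<or> (Dp = 1 \<and> fst x \<notin> ?Op)"
      using x unfolding Bad_def by blast
    have d1: "((\<lambda>x::real \<times> (real^'m). phi ?Op (fst x)) has_derivative (\<lambda>v. Dp * fst v)) (at x)"
    proof -
      have f1: "((\<lambda>x::real \<times> (real^'m). fst x) has_derivative (\<lambda>v. fst v)) (at x)"
        by (rule has_derivative_fst[OF has_derivative_ident])
      have "((\<lambda>x::real \<times> (real^'m). phi ?Op (fst x)) has_derivative (\<lambda>v. (*) Dp (fst v))) (at x)"
        by (rule has_derivative_compose[OF f1]) (use Dp(1) in \<open>simp add: has_field_derivative_def\<close>)
      then show ?thesis by simp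
    qed
    have d2: "((\<lambda>x::real \<times> (real^'m). inner E (snd x)) has_derivative (\<lambda>v. inner E (snd v))) (at x)"
      by (auto intro!: derivative_eq_intros)
    define Dw where "Dw = (\<lambda>v::real \<times> (real^'m). - (A * (Dp * fst v) + inner E (snd v)))"
    have dw: "(?w has_derivative Dw) (at x)"
      unfolding Dw_def by (intro has_derivative_minus has_derivative_add has_derivative_mult_right d1 d2)
    have bnd: "\<bar>Dw v\<bar> \<le> sqrt (gfac q \<kappa> x) * norm v" for v
    proof -
      have "Dw v = - inner (A * Dp, E) v" unfolding Dw_def by (cases v) (simp add: algebra_simps)
      then have "\<bar>Dw v\<bar> \<le> norm (A * Dp, E) * norm v" using Cauchy_Schwarz_ineq2[of "(A * Dp, E)" v] by simp
      also have "norm (A * Dp, E) \<le> sqrt (gfac q \<kappa> x)"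
      proof (cases "Dp = 0")
        case True
        then have "norm (A * Dp, E) = norm E" by (simp add: norm_Pair)
        also have "\<dots> \<le> 1" by (rule E1)
        also have "1 \<le> sqrt (gfac q \<kappa> x)" using gfac_ge1[of q \<kappa> x] by simp
        finally show ?thesis .
      next
        case False
        then have "Dp = 1" "fst x \<notin> ?Op" using Dp(2) by auto
        then have "norm (A * Dp, E) = sqrt (A^2 + (norm E)^2)" "gfac q \<kappa> x = 2"
          using gfac_notO[of x q \<kappa>] by (auto simp: norm_Pair)
        then show ?thesis using AE2 by simp
      qed
      finally show ?thesis by (simp add: mult_right_mono)
    qed
    show ?thesis
    proof (intro conjI allI impI)
      show "?w differentiable (at x)" using dw unfolding differentiable_def by blast
      fix D v assume "(?w has_derivative D) (at x)"
      then have "D = Dw" using has_derivative_unique dw by blast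
      then show "\<bar>D v\<bar> \<le> sqrt (gfac q \<kappa> x) * norm v" using bnd by simp
    qed
  qed
  have ae: "AE x in lebesgue. ?w differentiable (at x) \<and>
        (\<forall>D. (?w has_derivative D) (at x) \<longrightarrow> (\<forall>v. \<bar>D v\<bar> \<le> sqrt (gfac q \<kappa> x) * norm v))"
  proof (rule AE_I')
    show "{x :: real \<times> (real^'m). fst x \<in> Bad} \<in> null_sets lebesgue"
      using nB negligible_iff_null_sets by blast
    show "{x \<in> space lebesgue. \<not> (?w differentiable (at x) \<and>
        (\<forall>D. (?w has_derivative D) (at x) \<longrightarrow> (\<forall>v. \<bar>D v\<bar> \<le> sqrt (gfac q \<kappa> x) * norm v)))}
       \<subseteq> {x. fst x \<in> Bad}"
      using good by blast
  qed
  show ?thesis unfolding admissible_def using lip ae by blast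
qed

lemma adm_bound:
  fixes w :: "real \<times> (real^'m) \<Rightarrow> real"
  assumes "admissible q \<kappa> w"
  shows "w x - w z \<le> sqrt 2 * norm (z - x)"
proof -
  have "w x - w (x + (z - x)) \<le> sqrt 2 * norm (z - x)"
    by (rule segment_bound[OF assms, of "sqrt 2" 1]) (auto simp: gfac_le2)
  then show ?thesis by simp
qed

lemma open_cube_open: "open (open_cube :: (real \<times> (real^'m)) set)"
proof -
  have eq: "(open_cube :: (real \<times> (real^'m)) set) = {0<..<(1::real)} \<times> box (0::real^'m) 1"
    unfolding open_cube_def by (auto simp: mem_box_cart)
  show ?thesis unfolding eq by (intro open_Times open_box open_greaterThanLessThan)
qed

lemma norm_pair_eq: "norm (u :: real \<times> (real^'m)) = sqrt ((fst u)^2 + (norm (snd u))^2)"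
  using norm_Pair[of "fst u" "snd u"] by simp

lemma alpha_eq:
  fixes u :: "real \<times> (real^'m)"
  shows "alpha u = sqrt 2 * sqrt (\<bar>fst u\<bar>^2 + (min \<bar>fst u\<bar> (norm (snd u)))^2) + (norm (snd u) - min \<bar>fst u\<bar> (norm (snd u)))"
proof (cases "\<bar>fst u\<bar> \<le> norm (snd u)")
  case True
  have "sqrt 2 * sqrt (\<bar>fst u\<bar>^2 + \<bar>fst u\<bar>^2) = sqrt (4 * \<bar>fst u\<bar>^2)"
    by (simp add: real_sqrt_mult[symmetric])
  also have "\<dots> = 2 * \<bar>fst u\<bar>" by (simp add: real_sqrt_mult)
  finally show ?thesis using True unfolding alpha_def by (simp add: min_def)
next
  case False
  then show ?thesis unfolding alpha_def using norm_pair_eq[of u] by (simp add: min_def)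
qed

lemma rat_in_O:
  assumes enum: "bij_betw q {1..} (\<rat> \<inter> {0<..<1})" and kappa: "0 < \<kappa>"
    and r: "r \<in> \<rat>" "0 < r" "r < 1"
  shows "r \<in> O_set q \<kappa>"
proof -
  have "r \<in> q ` {1..}" using enum r unfolding bij_betw_def by auto
  then obtain i where i: "i \<in> {1..}" "q i = r" by blast
  have "0 < \<kappa> / 2 ^ i" using kappa by simp
  then have "r \<in> {q i - \<kappa> / 2 ^ i <..< q i + \<kappa> / 2 ^ i}" using i by simp
  then show ?thesis unfolding O_set_def using i by blast
qed

lemma dense_O:
  assumes enum: "bij_betw q {1..} (\<rat> \<inter> {0<..<1})" and kappa: "0 < \<kappa>"
    and x: "0 < x" "x < 1" and rho: "\<rho> > 0"
  shows "\<exists>s. s \<in> O_set q \<kappa> \<and> \<bar>s - x\<bar> < \<rho>"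
proof -
  have "x < x + min \<rho> (1 - x)" using x rho by simp
  then obtain r where r: "r \<in> \<rat>" "x < r" "r < x + min \<rho> (1 - x)" using Rats_dense_in_real by blast
  then have "r \<in> O_set q \<kappa>" using rat_in_O[OF enum kappa r(1)] x by simp
  then show ?thesis using r by (intro exI[of _ r]) auto
qed

lemma upper_bound:
  fixes y u :: "real \<times> (real ^ 'm)"
  assumes enum: "bij_betw q {1..} (\<rat> \<inter> {0<..<1})" and kappa: "0 < \<kappa>"
    and y_in: "y \<in> open_cube" and e: "e > 0"
  shows "\<exists>\<delta>>0. \<forall>h. 0 < \<bar>h\<bar> \<and> \<bar>h\<bar> < \<delta> \<longrightarrow>
           (\<forall>w. admissible q \<kappa> w \<longrightarrow> w y - w (y + h *\<^sub>R u) \<le> (alpha u + e) * \<bar>h\<bar>)"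
proof -
  obtain m where m: "m > 0" "ball y m \<subseteq> open_cube" using open_cube_open y_in openE by blast
  define a where "a = \<bar>fst u\<bar>"
  define c where "c = norm (snd u)"
  define b where "b = min a c"
  define lam where "lam = (if c = 0 then 0 else b / c)"
  have a0: "a \<ge> 0" and c0: "c \<ge> 0" and b0: "0 \<le> b" "b \<le> a" "b \<le> c" unfolding a_def c_def b_def by auto
  have lamc: "lam * c = b" unfolding lam_def using b0 by auto
  have lam01: "0 \<le> lam" "lam \<le> 1" unfolding lam_def using b0 c0 by auto
  have nu: "norm u = sqrt (a^2 + c^2)" unfolding a_def c_def using norm_pair_eq[of u] by simp
  have al: "alpha u = sqrt 2 * sqrt (a^2 + b^2) + (c - b)"
    unfolding a_def b_def c_def by (rule alpha_eq)
  define K where "K = norm u + 1"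
  have K0: "K > 0" unfolding K_def using norm_ge_zero[of u] by linarith
  define \<delta> where "\<delta> = m / (4 * K)"
  have d0: "\<delta> > 0" unfolding \<delta>_def using m K0 by simp
  show ?thesis
  proof (intro exI[of _ \<delta>] conjI allI impI d0)
    fix h :: real and w :: "real \<times> (real^'m) \<Rightarrow> real" assume h: "0 < \<bar>h\<bar> \<and> \<bar>h\<bar> < \<delta>" and adm: "admissible q \<kappa> w"
    have hK: "\<bar>h\<bar> * norm u < m / 4"
    proof -
      have "\<bar>h\<bar> * norm u \<le> \<bar>h\<bar> * K" unfolding K_def by (simp add: mult_left_mono)
      also have "\<dots> < \<delta> * K" using h K0 by (simp add: mult_strict_right_mono)
      also have "\<dots> = m / 4" unfolding \<delta>_def using K0 by simp
      finally show ?thesis .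
    qed
    define V1 where "V1 = (h * fst u, (h * lam) *\<^sub>R snd u)"
    define P1 where "P1 = y + V1"
    have nV1: "norm V1 = \<bar>h\<bar> * sqrt (a^2 + b^2)"
    proof -
      have "norm V1 = sqrt ((h * fst u)^2 + (\<bar>h * lam\<bar> * c)^2)" unfolding V1_def c_def by (simp add: norm_Pair)
      also have "\<bar>h * lam\<bar> * c = \<bar>h\<bar> * b" using lam01 lamc by (simp add: abs_mult)
      also have "(h * fst u)^2 + (\<bar>h\<bar> * b)^2 = h^2 * (a^2 + b^2)" unfolding a_def by (simp add: power_mult_distrib algebra_simps)
      also have "sqrt (h^2 * (a^2 + b^2)) = \<bar>h\<bar> * sqrt (a^2 + b^2)" by (simp add: real_sqrt_mult)
      finally show ?thesis .
    qed
    have nV1u: "norm V1 \<le> \<bar>h\<bar> * norm u"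
      unfolding nV1 nu using b0 a0 by (intro mult_left_mono real_sqrt_le_mono) (auto intro: power_mono)
    define W where "W = (0::real, (h * (1 - lam)) *\<^sub>R snd u)"
    have nW: "norm W = \<bar>h\<bar> * (c - b)"
    proof -
      have "norm W = \<bar>h * (1 - lam)\<bar> * c" unfolding W_def c_def by (simp add: norm_Pair)
      also have "\<dots> = \<bar>h\<bar> * (1 - lam) * c" using lam01 by (simp add: abs_mult)
      also have "\<dots> = \<bar>h\<bar> * (c - lam * c)" by (simp add: algebra_simps)
      also have "\<dots> = \<bar>h\<bar> * (c - b)" using lamc by simp
      finally show ?thesis .
    qed
    have nWu: "norm W \<le> \<bar>h\<bar> * norm u"
    proof -
      have "c \<le> sqrt (a^2 + c^2)" by (rule real_le_rsqrt) simp
      then have "c - b \<le> norm u" unfolding nu using b0 by linarith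
      then show ?thesis unfolding nW by (simp add: mult_left_mono)
    qed
    have P1c: "P1 \<in> open_cube"
    proof -
      have "dist y P1 < m" unfolding P1_def dist_norm using nV1u hK m by simp
      then show ?thesis using m(2) by auto
    qed
    then have P1f: "0 < fst P1" "fst P1 < 1" unfolding open_cube_def by auto
    define \<rho> where "\<rho> = min (m / 4) (e * \<bar>h\<bar> / 4)"
    have rho0: "\<rho> > 0" unfolding \<rho>_def using m e h by simp
    obtain s where s: "s \<in> O_set q \<kappa>" "\<bar>s - fst P1\<bar> < \<rho>"
      using dense_O[OF enum kappa P1f rho0] by blast
    define \<sigma> where "\<sigma> = s - fst P1"
    define Q1 where "Q1 = P1 + (\<sigma>, 0)"
    define Q2 where "Q2 = Q1 + W"
    have Q3: "Q2 + (- \<sigma>, 0) = y + h *\<^sub>R u"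
      unfolding Q2_def Q1_def P1_def V1_def W_def
      by (simp add: prod_eq_iff algebra_simps)
    obtain \<rho>s where rs: "\<rho>s > 0" "ball s \<rho>s \<subseteq> O_set q \<kappa>" using open_O_set s(1) openE by blast
    have i1: "w y - w P1 \<le> sqrt 2 * norm V1" using adm_bound[OF adm, of y P1] unfolding P1_def by simp
    have i2: "w P1 - w Q1 \<le> sqrt 2 * \<bar>\<sigma>\<bar>" using adm_bound[OF adm, of P1 Q1] unfolding Q1_def by simp
    have i4: "w Q2 - w (y + h *\<^sub>R u) \<le> sqrt 2 * \<bar>\<sigma>\<bar>"
    proof -
      have "w Q2 - w (Q2 + (- \<sigma>, 0)) \<le> sqrt 2 * norm ((Q2 + (- \<sigma>, 0)) - Q2)" by (rule adm_bound[OF adm])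
      then show ?thesis unfolding Q3[symmetric] by simp
    qed
    have i3: "w Q1 - w (Q1 + W) \<le> 1 * norm W"
    proof (rule segment_bound[OF adm, of 1 "min (m/4) \<rho>s"])
      show "(0::real) \<le> 1" by simp
      show "0 < min (m / 4) \<rho>s" using m rs by simp
      fix z :: "real \<times> (real^'m)" and t :: real assume z: "norm z < min (m / 4) \<rho>s" and t: "t \<in> {0..1}"
      let ?x = "Q1 + z + t *\<^sub>R W"
      have "norm (?x - y) \<le> norm V1 + \<bar>\<sigma>\<bar> + norm z + t * norm W"
      proof -
        have eqx: "?x - y = V1 + (\<sigma>, 0) + z + t *\<^sub>R W" unfolding Q1_def P1_def by (simp add: algebra_simps)
        have n1: "norm (V1 + (\<sigma>, 0) + z + t *\<^sub>R W) \<le> norm (V1 + (\<sigma>, 0) + z) + norm (t *\<^sub>R W)"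
          by (rule norm_triangle_ineq)
        have n2: "norm (V1 + (\<sigma>, 0) + z) \<le> norm (V1 + (\<sigma>, 0)) + norm z"
          by (rule norm_triangle_ineq)
        have n3: "norm (V1 + (\<sigma>, 0::real^'m)) \<le> norm V1 + norm ((\<sigma>, 0::real^'m))"
          by (rule norm_triangle_ineq)
        have "norm (?x - y) \<le> norm V1 + norm ((\<sigma>, 0::real^'m)) + norm z + norm (t *\<^sub>R W)"
          unfolding eqx using n1 n2 n3 by linarith
        then show ?thesis using t by (simp add: norm_Pair)
      qed
      also have "\<dots> < m"
      proof -
        have "t * norm W \<le> norm W" using t by (simp add: mult_left_le_one_le)
        moreover have "\<bar>\<sigma>\<bar> < m / 4" using s(2) unfolding \<sigma>_def \<rho>_def by simp
        ultimately show ?thesis using nV1u nWu hK z by linarith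
      qed
      finally have "?x \<in> open_cube" using m(2) by (auto simp: dist_norm norm_minus_commute)
      moreover have "fst ?x \<in> O_set q \<kappa>"
      proof -
        have "fst ?x = s + fst z" unfolding Q1_def P1_def W_def \<sigma>_def by simp
        moreover have "\<bar>fst z\<bar> < \<rho>s"
          using z norm_fst_le[of "fst z" "snd z"] by simp
        ultimately have "fst ?x \<in> ball s \<rho>s" by (simp add: dist_real_def)
        then show ?thesis using rs(2) by blast
      qed
      ultimately have "gfac q \<kappa> ?x \<le> 1" by (rule gfac_O)
      then show "gfac q \<kappa> ?x \<le> 1^2" by simp
    qed
    have "w y - w (y + h *\<^sub>R u) \<le> sqrt 2 * norm V1 + norm W + 2 * sqrt 2 * \<bar>\<sigma>\<bar>"
      using i1 i2 i3 i4 unfolding Q2_def by linarith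
    also have "sqrt 2 * norm V1 + norm W = alpha u * \<bar>h\<bar>"
      unfolding nV1 nW al by (simp add: algebra_simps)
    also have "2 * sqrt 2 * \<bar>\<sigma>\<bar> \<le> e * \<bar>h\<bar>"
    proof -
      have "\<bar>\<sigma>\<bar> < e * \<bar>h\<bar> / 4" using s(2) unfolding \<sigma>_def \<rho>_def by simp
      moreover have "sqrt 2 \<le> 2" using real_sqrt_le_mono[of 2 4] by simp
      ultimately have "2 * sqrt 2 * \<bar>\<sigma>\<bar> \<le> 2 * 2 * (e * \<bar>h\<bar> / 4)"
        by (intro mult_mono) auto
      then show ?thesis by simp
    qed
    finally show "w y - w (y + h *\<^sub>R u) \<le> (alpha u + e) * \<bar>h\<bar>" by (simp add: algebra_simps)
  qed
qed

lemma div_mul_cancel_aux: fixes x c k :: real assumes "k \<noteq> 0" shows "x / (c * k) * k = x / c"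
  using assms by simp

lemma lint_measure:
  "(LINT t:{a<..<b}|lborel. \<bar>theta q \<kappa> t - 2\<bar>) = measure lebesgue (O_set q \<kappa> \<inter> {a<..<b})"
proof -
  have eq: "(\<lambda>t. indicator {a<..<b} t *\<^sub>R \<bar>theta q \<kappa> t - 2\<bar>) = indicator (O_set q \<kappa> \<inter> {a<..<b})"
    by (auto simp: fun_eq_iff theta_cases indicator_def)
  have "(LINT t:{a<..<b}|lborel. \<bar>theta q \<kappa> t - 2\<bar>) = integral\<^sup>L lborel (indicator (O_set q \<kappa> \<inter> {a<..<b}) :: real \<Rightarrow> real)"
    unfolding set_lebesgue_integral_def eq ..
  also have "\<dots> = measure lborel (O_set q \<kappa> \<inter> {a<..<b})" by simp
  also have "\<dots> = measure lebesgue (O_set q \<kappa> \<inter> {a<..<b})"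
  proof -
    have "O_set q \<kappa> \<inter> {a<..<b} \<in> sets lborel" using open_O_set[of q \<kappa>] by auto
    then show ?thesis by simp
  qed
  finally show ?thesis .
qed

lemma lower_bound:
  fixes y u :: "real \<times> (real ^ 'm)"
  assumes y_in: "y \<in> open_cube"
    and dens: "\<forall>\<epsilon>>0. \<exists>\<delta>>0. \<forall>a b. a < fst y \<and> fst y < b \<and> b - a < \<delta> \<longrightarrow>
                 \<bar>(LINT t:{a<..<b}|lborel. \<bar>theta q \<kappa> t - 2\<bar>) / (b - a)\<bar> < \<epsilon>"
    and e: "e > 0"
  shows "\<exists>\<delta>>0. \<forall>h. 0 < \<bar>h\<bar> \<and> \<bar>h\<bar> < \<delta> \<longrightarrow>
           (\<exists>w. admissible q \<kappa> w \<and> (alpha u - e) * \<bar>h\<bar> \<le> w y - w (y + h *\<^sub>R u))"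
proof -
  let ?Op = "O_set q \<kappa>"
  have Oo: "open ?Op" by (rule open_O_set)
  have Os: "?Op \<in> sets lebesgue" using Oo by simp
  have fmc: "?Op \<inter> cball t r \<in> lmeasurable" for t r
  proof -
    have "cball t r \<inter> ?Op \<in> lmeasurable" by (rule fmeasurable_Int_fmeasurable[OF _ Os]) simp
    then show ?thesis by (simp add: Int_commute)
  qed
  have fmo: "?Op \<inter> {a<..<b} \<in> lmeasurable" for a b
  proof -
    have "{a<..<b} \<inter> ?Op \<in> lmeasurable" by (rule fmeasurable_Int_fmeasurable[OF _ Os]) simp
    then show ?thesis by (simp add: Int_commute)
  qed
  have mI: "?Op \<inter> {a<..b} \<in> sets lebesgue" for a b
    using Os lmeas_Ioc[of a b, THEN fmeasurableD] by (rule sets.Int)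
  define a where "a = \<bar>fst u\<bar>"
  define c where "c = norm (snd u)"
  have a0: "a \<ge> 0" and c0: "c \<ge> 0" unfolding a_def c_def by auto
  have nu: "norm u = sqrt (a^2 + c^2)" unfolding a_def c_def using norm_pair_eq[of u] by simp
  define A where "A = (if a \<le> c then 1 else sqrt 2 * a / norm u)"
  define B where "B = (if a \<le> c then 1 else sqrt 2 * c / norm u)"
  have AB: "0 \<le> A" "0 \<le> B" "B \<le> 1" "A^2 + B^2 \<le> 2" "A * a + B * c = alpha u"
  proof -
    have "0 \<le> A \<and> 0 \<le> B \<and> B \<le> 1 \<and> A^2 + B^2 \<le> 2 \<and> A * a + B * c = alpha u"
    proof (cases "a \<le> c")
      case True
      then show ?thesis unfolding A_def B_def alpha_def a_def c_def by simp
    next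
      case False
      have nu2: "(norm u)^2 = a^2 + c^2" unfolding nu by simp
      have "a > 0" using False c0 by linarith
      then have pos: "a^2 + c^2 > 0" by (simp add: add_pos_nonneg)
      then have nupos: "norm u > 0" using nu by simp
      have A2: "A^2 = 2 * a^2 / (norm u)^2" unfolding A_def using False by (simp add: power_divide power_mult_distrib)
      have B2: "B^2 = 2 * c^2 / (norm u)^2" unfolding B_def using False by (simp add: power_divide power_mult_distrib)
      have "2 * a^2 / (a^2 + c^2) + 2 * c^2 / (a^2 + c^2) = (2 * (a^2 + c^2)) / (a^2 + c^2)"
        by (simp add: add_divide_distrib distrib_left)
      also have "\<dots> = 2" by (rule nonzero_mult_div_cancel_right) (use pos in linarith)
      finally have "A^2 + B^2 = 2" unfolding A2 B2 nu2 .
      moreover have "B \<le> 1"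
      proof -
        have "c^2 \<le> a^2" using False c0 by (simp add: power_mono)
        then have "2 * c^2 \<le> (norm u)^2" unfolding nu2 by simp
        then have "B^2 \<le> 1" unfolding B2 using nupos by (simp add: divide_le_eq)
        then show ?thesis using power2_le_imp_le[of B 1] by simp
      qed
      moreover have "B \<ge> 0" unfolding B_def using False c0 nupos by simp
      moreover have "A * a + B * c = sqrt 2 * (a^2 + c^2) / norm u"
        unfolding A_def B_def using False by (simp add: power2_eq_square add_divide_distrib algebra_simps)
      moreover have "sqrt 2 * (a^2 + c^2) / norm u = sqrt 2 * norm u"
      proof -
        have "sqrt 2 * (a^2 + c^2) / norm u = sqrt 2 * ((norm u)^2 / norm u)" unfolding nu2 by simp
        also have "(norm u)^2 / norm u = norm u" using nupos by (simp add: power2_eq_square)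
        finally show ?thesis .
      qed
      moreover have "alpha u = sqrt 2 * norm u" unfolding alpha_def using False unfolding a_def c_def by simp
      moreover have "A \<ge> 0" unfolding A_def using False a0 nupos by simp
      ultimately show ?thesis by simp
    qed
    then show "0 \<le> A" "0 \<le> B" "B \<le> 1" "A^2 + B^2 \<le> 2" "A * a + B * c = alpha u" by auto
  qed
  have A2: "A \<le> 2"
  proof -
    have "A^2 \<le> 2" using AB(4) zero_le_power2[of B] by linarith
    then have "A^2 \<le> 2^2" by simp
    then show ?thesis using power2_le_imp_le[of A 2] by simp
  qed
  define y1 where "y1 = fst y"
  have y1: "0 < y1" "y1 < 1" using y_in unfolding open_cube_def y1_def by auto
  define \<epsilon>' where "\<epsilon>' = e / (8 * (a + 1))"
  have eps': "\<epsilon>' > 0" unfolding \<epsilon>'_def using e a0 by simp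
  obtain \<delta>d where dd: "\<delta>d > 0" "\<And>a' b'. a' < y1 \<Longrightarrow> y1 < b' \<Longrightarrow> b' - a' < \<delta>d \<Longrightarrow>
       \<bar>(LINT t:{a'<..<b'}|lborel. \<bar>theta q \<kappa> t - 2\<bar>) / (b' - a')\<bar> < \<epsilon>'"
    using dens eps' unfolding y1_def by blast
  define \<delta> where "\<delta> = min (\<delta>d / (4 * (a + 1))) (min y1 (1 - y1) / (a + 1))"
  have d0: "\<delta> > 0" unfolding \<delta>_def using dd y1 a0 by simp
  show ?thesis
  proof (intro exI[of _ \<delta>] conjI allI impI d0)
    fix h :: real assume h: "0 < \<bar>h\<bar> \<and> \<bar>h\<bar> < \<delta>"
    define r where "r = \<bar>h\<bar> * a"
    have r0: "r \<ge> 0" unfolding r_def using a0 by simp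
    have rha: "r \<le> \<bar>h\<bar> * (a + 1)" unfolding r_def by (simp add: mult_left_mono)
    have hd: "\<bar>h\<bar> * (a + 1) < \<delta> * (a + 1)" using h a0 by (intro mult_strict_right_mono) auto
    have r1: "4 * r < \<delta>d"
    proof -
      have "\<delta> \<le> \<delta>d / (4 * (a + 1))" unfolding \<delta>_def by simp
      then have "\<delta> * (a + 1) \<le> \<delta>d / (4 * (a + 1)) * (a + 1)" using a0 by (intro mult_right_mono) auto
      also have "\<dots> = \<delta>d / 4" by (rule div_mul_cancel_aux) (use a0 in linarith)
      finally have "\<delta> * (a + 1) \<le> \<delta>d / 4" .
      then show ?thesis using rha hd by linarith
    qed
    have r2: "r < y1" "r < 1 - y1"
    proof -
      have "\<delta> \<le> min y1 (1 - y1) / (a + 1)" unfolding \<delta>_def by simp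
      then have "\<delta> * (a + 1) \<le> min y1 (1 - y1) / (a + 1) * (a + 1)" using a0 by (intro mult_right_mono) auto
      also have "\<dots> = min y1 (1 - y1)" proof - have "a + 1 \<noteq> 0" using a0 by linarith then show ?thesis by simp qed
      finally have "\<delta> * (a + 1) \<le> min y1 (1 - y1)" .
      then show "r < y1" "r < 1 - y1" using rha hd by auto
    qed
    define m where "m = measure lebesgue (?Op \<inter> cball y1 r)"
    have m0: "m \<ge> 0" unfolding m_def by simp
    have mb: "2 * m \<le> e * \<bar>h\<bar>"
    proof (cases "r = 0")
      case True
      have "negligible (?Op \<inter> cball y1 r)" using True
        by (intro negligible_subset[OF negligible_sing[of y1]]) auto
      then have "m = 0" unfolding m_def by (rule negligible_imp_measure0)
      then show ?thesis using e by simp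
    next
      case False
      then have rp: "r > 0" using r0 by simp
      have "\<bar>(LINT t:{y1 - 2*r<..<y1 + 2*r}|lborel. \<bar>theta q \<kappa> t - 2\<bar>) / ((y1 + 2*r) - (y1 - 2*r))\<bar> < \<epsilon>'"
        using dd(2)[of "y1 - 2*r" "y1 + 2*r"] rp r1 by simp
      then have "measure lebesgue (?Op \<inter> {y1 - 2*r<..<y1 + 2*r}) / (4 * r) < \<epsilon>'"
        unfolding lint_measure using rp by simp
      then have M1: "measure lebesgue (?Op \<inter> {y1 - 2*r<..<y1 + 2*r}) < \<epsilon>' * (4 * r)"
        using rp by (simp add: divide_less_eq)
      have "m \<le> measure lebesgue (?Op \<inter> {y1 - 2*r<..<y1 + 2*r})" unfolding m_def
      proof (rule measure_mono_fmeasurable[OF _ fmeasurableD[OF fmc] fmo])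
        show "?Op \<inter> cball y1 r \<subseteq> ?Op \<inter> {y1 - 2 * r<..<y1 + 2 * r}"
          using rp by (auto simp: dist_real_def)
      qed
      then have "m < \<epsilon>' * (4 * r)" using M1 by linarith
      also have "\<epsilon>' * (4 * r) \<le> e * \<bar>h\<bar> / 2"
      proof -
        define k where "k = a + 1"
        have kpos: "k > 0" unfolding k_def using a0 by simp
        have "\<epsilon>' * (4 * r) = (e / (8 * k) * (4 * \<bar>h\<bar>)) * a"
          unfolding \<epsilon>'_def r_def k_def by (simp add: algebra_simps)
        also have "\<dots> \<le> (e / (8 * k) * (4 * \<bar>h\<bar>)) * k"
          using e kpos unfolding k_def by (intro mult_left_mono) auto
        also have "\<dots> = e * \<bar>h\<bar> / 2" using kpos by simp
        finally show ?thesis .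
      qed
      finally show ?thesis by simp
    qed
    define \<sigma>1 where "\<sigma>1 = sgn (h * fst u)"
    define A' where "A' = A * \<sigma>1"
    define E' where "E' = (if c = 0 then 0 else (B * sgn h / c) *\<^sub>R snd u)"
    have nE': "norm E' = (if c = 0 then 0 else B)"
      unfolding E'_def c_def using AB(2) h by (auto simp: abs_mult sgn_if)
    have adm: "admissible q \<kappa> (\<lambda>x. - (A' * phi ?Op (fst x) + inner E' (snd x)))"
    proof (rule adm_w)
      show "norm E' \<le> 1" unfolding nE' using AB(3) by simp
      have "A'^2 \<le> A^2" unfolding A'_def \<sigma>1_def by (auto simp: sgn_if power_mult_distrib)
      moreover have "(norm E')^2 \<le> B^2" unfolding nE' by simp
      ultimately show "A'^2 + (norm E')^2 \<le> 2" using AB(4) by linarith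
    qed
    let ?w = "\<lambda>x. - (A' * phi ?Op (fst x) + inner E' (snd x))"
    have wdiff: "?w y - ?w (y + h *\<^sub>R u) = A' * (phi ?Op (y1 + h * fst u) - phi ?Op y1) + inner E' (h *\<^sub>R snd u)"
      unfolding y1_def by (simp add: inner_add_right algebra_simps)
    have inE: "inner E' (h *\<^sub>R snd u) = B * \<bar>h\<bar> * c"
    proof (cases "c = 0")
      case True then show ?thesis unfolding E'_def by simp
    next
      case False
      have "inner E' (h *\<^sub>R snd u) = B * sgn h / c * h * (norm (snd u))^2"
        unfolding E'_def using False by (simp add: power2_norm_eq_inner)
      also have "\<dots> = B * \<bar>h\<bar> * c" unfolding c_def[symmetric] using False
        by (simp add: power2_eq_square sgn_mult_self_eq abs_real_def sgn_if)
      finally show ?thesis .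
    qed
    have phiB: "A' * (phi ?Op (y1 + h * fst u) - phi ?Op y1) \<ge> A * (r - m)"
    proof -
      have rr: "r = \<bar>h * fst u\<bar>" unfolding r_def a_def by (simp add: abs_mult)
      consider "h * fst u > 0" | "h * fst u < 0" | "h * fst u = 0" by linarith
      then show ?thesis
      proof cases
        case 1
        then have e1: "y1 + h * fst u = y1 + r" using rr by simp
        have e2: "phi ?Op (y1 + r) - phi ?Op y1 = r - measure lebesgue (?Op \<inter> {y1<..y1 + r})"
          using phi_diff2[OF Oo, of y1 "y1 + r"] y1 r0 r2 by simp
        have e3: "measure lebesgue (?Op \<inter> {y1<..y1 + r}) \<le> m" unfolding m_def
          by (rule measure_mono_fmeasurable[OF _ mI fmc]) (auto simp: dist_real_def)
        have e4: "A' = A" unfolding A'_def \<sigma>1_def using 1 by simp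
        have eqA: "A' * (phi ?Op (y1 + h * fst u) - phi ?Op y1) = A * (phi ?Op (y1 + r) - phi ?Op y1)"
          using e1 e4 by simp
        have D: "phi ?Op (y1 + r) - phi ?Op y1 \<ge> r - m" using e2 e3 by linarith
        show ?thesis unfolding eqA using mult_left_mono[OF D AB(1)] .
      next
        case 2
        then have e1: "y1 + h * fst u = y1 - r" using rr by simp
        have e2: "phi ?Op y1 - phi ?Op (y1 - r) = r - measure lebesgue (?Op \<inter> {y1 - r<..y1})"
          using phi_diff2[OF Oo, of "y1 - r" y1] y1 r0 r2 by simp
        have e3: "measure lebesgue (?Op \<inter> {y1 - r<..y1}) \<le> m" unfolding m_def
          by (rule measure_mono_fmeasurable[OF _ mI fmc]) (auto simp: dist_real_def)
        have e4: "A' = - A" unfolding A'_def \<sigma>1_def using 2 by simp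
        have eqA: "A' * (phi ?Op (y1 + h * fst u) - phi ?Op y1) = A * (phi ?Op y1 - phi ?Op (y1 - r))"
          unfolding e1 e4 by (simp add: algebra_simps)
        have D: "phi ?Op y1 - phi ?Op (y1 - r) \<ge> r - m" using e2 e3 by linarith
        show ?thesis unfolding eqA using mult_left_mono[OF D AB(1)] .
      next
        case 3
        then have "r = 0" using rr by simp
        have e0: "y1 + h * fst u = y1" using 3 by linarith
        have "A' * (phi ?Op (y1 + h * fst u) - phi ?Op y1) = 0" unfolding e0 by simp
        moreover have "A * (r - m) \<le> 0" using \<open>r = 0\<close> AB(1) m0 by (simp add: mult_nonneg_nonneg)
        ultimately show ?thesis by linarith
      qed
    qed
    have "(alpha u - e) * \<bar>h\<bar> \<le> A * (r - m) + B * \<bar>h\<bar> * c"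
    proof -
      have "A * (r - m) + B * \<bar>h\<bar> * c = \<bar>h\<bar> * (A * a + B * c) - A * m"
        unfolding r_def by (simp add: algebra_simps)
      also have "\<dots> = \<bar>h\<bar> * alpha u - A * m" using AB(5) by simp
      finally have eq: "A * (r - m) + B * \<bar>h\<bar> * c = \<bar>h\<bar> * alpha u - A * m" .
      have "A * m \<le> 2 * m" using A2 m0 by (simp add: mult_right_mono)
      then show ?thesis unfolding eq using mb by (simp add: algebra_simps)
    qed
    also have "\<dots> \<le> ?w y - ?w (y + h *\<^sub>R u)" unfolding wdiff inE using phiB by simp
    finally show "\<exists>w. admissible q \<kappa> w \<and> (alpha u - e) * \<bar>h\<bar> \<le> w y - w (y + h *\<^sub>R u)"
      using adm by blast
  qed
qed

theorem mainTheorem8: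
  fixes q :: "nat \<Rightarrow> real" and \<kappa> :: real and y u :: "real \<times> (real ^ 'm)"
  assumes enum: "bij_betw q {1..} (\<rat> \<inter> {0<..<1})"
    and kappa: "0 < \<kappa>" "\<kappa> < 1/8"
    and y_in: "y \<in> open_cube"
    and dens: "\<forall>\<epsilon>>0. \<exists>\<delta>>0. \<forall>a b. a < fst y \<and> fst y < b \<and> b - a < \<delta> \<longrightarrow>
                 \<bar>(LINT t:{a<..<b}|lborel. \<bar>theta q \<kappa> t - 2\<bar>) / (b - a)\<bar> < \<epsilon>"
  shows "((\<lambda>h. dist_g q \<kappa> y (y + h *\<^sub>R u) / \<bar>h\<bar>) \<longlongrightarrow> alpha u) (at 0)"
proof (rule tendstoI)
  fix e :: real assume e: "e > 0"
  have e2: "e / 2 > 0" using e by simp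
  obtain \<delta>1 where d1: "\<delta>1 > 0" "\<And>h. 0 < \<bar>h\<bar> \<and> \<bar>h\<bar> < \<delta>1 \<Longrightarrow>
           (\<forall>w. admissible q \<kappa> w \<longrightarrow> w y - w (y + h *\<^sub>R u) \<le> (alpha u + e / 2) * \<bar>h\<bar>)"
    using upper_bound[OF enum kappa(1) y_in e2, of u] by blast
  obtain \<delta>2 where d2: "\<delta>2 > 0" "\<And>h. 0 < \<bar>h\<bar> \<and> \<bar>h\<bar> < \<delta>2 \<Longrightarrow>
           (\<exists>w. admissible q \<kappa> w \<and> (alpha u - e / 2) * \<bar>h\<bar> \<le> w y - w (y + h *\<^sub>R u))"
    using lower_bound[OF y_in dens e2, of u] by blast
  have main: "dist (dist_g q \<kappa> y (y + h *\<^sub>R u) / \<bar>h\<bar>) (alpha u) < e"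
    if h: "h \<noteq> 0" "dist h 0 < min \<delta>1 \<delta>2" for h
  proof -
    have hp: "0 < \<bar>h\<bar>" "\<bar>h\<bar> < \<delta>1" "\<bar>h\<bar> < \<delta>2" using h by auto
    obtain w0 where w0: "admissible q \<kappa> w0" "(alpha u - e / 2) * \<bar>h\<bar> \<le> w0 y - w0 (y + h *\<^sub>R u)"
      using d2(2)[of h] hp by blast
    define S where "S = {w y - w (y + h *\<^sub>R u) | w. admissible q \<kappa> w}"
    have w0S: "w0 y - w0 (y + h *\<^sub>R u) \<in> S" unfolding S_def using w0(1) by blast
    then have ne: "S \<noteq> {}" by blast
    have bdd: "bdd_above S"
    proof (rule bdd_aboveI)
      fix x assume "x \<in> S"
      then obtain w where "admissible q \<kappa> w" "x = w y - w (y + h *\<^sub>R u)" unfolding S_def by blast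
      then show "x \<le> sqrt 2 * norm ((y + h *\<^sub>R u) - y)" using adm_bound by blast
    qed
    have dg: "dist_g q \<kappa> y (y + h *\<^sub>R u) = Sup S" unfolding dist_g_def S_def ..
    have up: "Sup S \<le> (alpha u + e / 2) * \<bar>h\<bar>"
    proof (rule cSup_least[OF ne])
      fix x assume "x \<in> S"
      then obtain w where "admissible q \<kappa> w" "x = w y - w (y + h *\<^sub>R u)" unfolding S_def by blast
      then show "x \<le> (alpha u + e / 2) * \<bar>h\<bar>" using d1(2)[of h] hp by blast
    qed
    have lo: "(alpha u - e / 2) * \<bar>h\<bar> \<le> Sup S"
      using w0(2) cSup_upper[OF w0S bdd] by linarith
    have "Sup S / \<bar>h\<bar> \<le> alpha u + e / 2" using up hp(1) by (simp add: pos_divide_le_eq)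
    moreover have "alpha u - e / 2 \<le> Sup S / \<bar>h\<bar>" using lo hp(1) by (simp add: pos_le_divide_eq)
    ultimately have "\<bar>Sup S / \<bar>h\<bar> - alpha u\<bar> \<le> e / 2" by linarith
    then show ?thesis unfolding dg dist_real_def using e by linarith
  qed
  show "\<forall>\<^sub>F h in at 0. dist (dist_g q \<kappa> y (y + h *\<^sub>R u) / \<bar>h\<bar>) (alpha u) < e"
    unfolding eventually_at using main d1(1) d2(1)
    by (intro exI[of _ "min \<delta>1 \<delta>2"]) auto
qed

end
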